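(* Consider the multi-product pricing model in the context, with a given positive vector $f\in\mathbb{R}^n$, exogenously given $q_{\min}>0$ and $q_{\max}=e^{k}q_{\min}$ for some $k>0$, and suppose the firm restricts prices to $p_i\in[q_{\min}f_i,\,q_{\max}f_i]$ for all $i\in N$ (for every customer type). Let $\bar{\mathcal{R}}$ be the maximum personalized profit subject to these constraints and $\mathcal{R}^f:=\max_{q\in[q_{\min},q_{\max}]}R(qf)$. If A0 and A1 hold, then $\bar{\mathcal{R}}\le (1+k)\,\mathcal{R}^f$.
   Context: Products $N=\{1,\dots,n\}$, customer types $M=\{1,\dots,m\}$, non-negative demand functions $d_{ij}(p)$ for product $i$ and type $j$ at price vector $p\in\mathbb{R}^n_{\ge0}$; type profit $R_j(p)=\sum_i p_id_{ij}(p)$; weights $\theta_j>0$ with $\sum_j\theta_j=1$; $R(p)=\sum_j\theta_jR_j(p)$. In the constrained setting, let $\mathcal{P}:=\{p: q_{\min}f_i\le p_i\le q_{\max}f_i,\ i\in N\}$, $\mathcal{R}^*_j:=\max_{p\in\mathcal{P}}R_j(p)$ and $\bar{\mathcal{R}}:=\sum_j\theta_j\mathcal{R}^*_j$. Assumption A0: for each $j$, the maximum of $R_j$ over $\mathcal{P}$ is attained at a price vector $\bar p^j$ with positive finite components; these are fixed. Define $\delta_{ij}(q):=1$ if $q\le\bar p_{ij}/f_i$ and $0$ otherwise, $G(q):=\sum_j\theta_j\sum_i f_id_{ij}(\bar p^j)\delta_{ij}(q)$ and $H(q):=\sum_j\theta_j\sum_i f_id_{ij}(qf)$. Assumption A1: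 $G(q)\le H(q)$ for all $q\ge0$. *)

theory Defs
  imports Complex_Main
begin

text \<open>Products are the elements of a finite type 'i, customer types those of a finite type 'j.
  A price vector is a function 'i \<Rightarrow> real. The demand d i j p is d_ij(p).\<close>

definition type_profit :: "('i::finite \<Rightarrow> 'j \<Rightarrow> ('i \<Rightarrow> real) \<Rightarrow> real) \<Rightarrow> 'j \<Rightarrow> ('i \<Rightarrow> real) \<Rightarrow> real" where
  "type_profit d j p = (\<Sum>i\<in>UNIV. p i * d i j p)"

definition total_profit :: "('j::finite \<Rightarrow> real) \<Rightarrow> ('i::finite \<Rightarrow> 'j \<Rightarrow> ('i \<Rightarrow> real) \<Rightarrow> real) \<Rightarrow> ('i \<Rightarrow> real) \<Rightarrow> real" where
  "total_profit \<theta> d p = (\<Sum>j\<in>UNIV. \<theta> j * type_profit d j p)"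

definition price_box :: "real \<Rightarrow> real \<Rightarrow> ('i \<Rightarrow> real) \<Rightarrow> ('i \<Rightarrow> real) set" where
  "price_box qmin qmax f = {p. \<forall>i. qmin * f i \<le> p i \<and> p i \<le> qmax * f i}"

text \<open>Maximal type-j profit over the box (a max; under A0 it is attained).\<close>
definition type_opt :: "('i::finite \<Rightarrow> 'j \<Rightarrow> ('i \<Rightarrow> real) \<Rightarrow> real) \<Rightarrow> real \<Rightarrow> real \<Rightarrow> ('i \<Rightarrow> real) \<Rightarrow> 'j \<Rightarrow> real" where
  "type_opt d qmin qmax f j = (SUP p \<in> price_box qmin qmax f. type_profit d j p)"

definition personalized_opt :: "('j::finite \<Rightarrow> real) \<Rightarrow> ('i::finite \<Rightarrow> 'j \<Rightarrow> ('i \<Rightarrow> real) \<Rightarrow> real) \<Rightarrow> real \<Rightarrow> real \<Rightarrow> ('i \<Rightarrow> real) \<Rightarrow> real" where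
  "personalized_opt \<theta> d qmin qmax f = (\<Sum>j\<in>UNIV. \<theta> j * type_opt d qmin qmax f j)"

definition uniform_opt :: "('j::finite \<Rightarrow> real) \<Rightarrow> ('i::finite \<Rightarrow> 'j \<Rightarrow> ('i \<Rightarrow> real) \<Rightarrow> real) \<Rightarrow> real \<Rightarrow> real \<Rightarrow> ('i \<Rightarrow> real) \<Rightarrow> real" where
  "uniform_opt \<theta> d qmin qmax f = (SUP q \<in> {qmin..qmax}. total_profit \<theta> d (\<lambda>i. q * f i))"

definition delta_ind :: "('j \<Rightarrow> 'i \<Rightarrow> real) \<Rightarrow> ('i \<Rightarrow> real) \<Rightarrow> 'i \<Rightarrow> 'j \<Rightarrow> real \<Rightarrow> real" where
  "delta_ind pbar f i j q = (if q \<le> pbar j i / f i then 1 else 0)"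

definition G_fun :: "('j::finite \<Rightarrow> real) \<Rightarrow> ('i::finite \<Rightarrow> 'j \<Rightarrow> ('i \<Rightarrow> real) \<Rightarrow> real) \<Rightarrow> ('j \<Rightarrow> 'i \<Rightarrow> real) \<Rightarrow> ('i \<Rightarrow> real) \<Rightarrow> real \<Rightarrow> real" where
  "G_fun \<theta> d pbar f q = (\<Sum>j\<in>UNIV. \<theta> j * (\<Sum>i\<in>UNIV. f i * d i j (pbar j) * delta_ind pbar f i j q))"

definition H_fun :: "('j::finite \<Rightarrow> real) \<Rightarrow> ('i::finite \<Rightarrow> 'j \<Rightarrow> ('i \<Rightarrow> real) \<Rightarrow> real) \<Rightarrow> ('i \<Rightarrow> real) \<Rightarrow> real \<Rightarrow> real" where
  "H_fun \<theta> d f q = (\<Sum>j\<in>UNIV. \<theta> j * (\<Sum>i\<in>UNIV. f i * d i j (\<lambda>l. q * f l)))"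

end

theory Submission
  imports Defs
begin

lemma key:
  fixes S :: "'s set" and w t :: "'s \<Rightarrow> real"
  assumes fin: "finite S" and apos: "a > 0" and wn: "\<forall>s\<in>S. 0 \<le> w s"
    and tb: "\<forall>s\<in>S. a \<le> t s \<and> t s \<le> B" and aB: "a \<le> B" and C0: "C \<ge> 0"
    and hyp: "\<forall>q. a \<le> q \<and> q \<le> B \<longrightarrow> q * (\<Sum>s\<in>{s\<in>S. q \<le> t s}. w s) \<le> C"
  shows "(\<Sum>s\<in>S. w s * t s) \<le> C * (1 + ln (B / a))"
  using tb aB hyp
proof (induction "card (t ` S)" arbitrary: t B rule: less_induct)
  case less
  have lnB: "ln (B / a) \<ge> 0" using less.prems apos by simp
  show ?case
  proof (cases "S = {}")
    case True then show ?thesis using C0 lnB by (simp add: distrib_left)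
  next
    case False
    define b where "b = Max (t ` S)"
    have bin: "b \<in> t ` S" unfolding b_def using False fin by simp
    have bge: "\<forall>s\<in>S. t s \<le> b" unfolding b_def using fin by simp
    have ab: "a \<le> b" "b \<le> B" using bin less.prems by auto
    have bpos: "b > 0" using ab apos by simp
    have Fb: "b * (\<Sum>s\<in>{s\<in>S. b \<le> t s}. w s) \<le> C" using less.prems ab by auto
    show ?thesis
    proof (cases "t ` S = {b}")
      case True
      then have "\<forall>s\<in>S. t s = b" by auto
      then have eqS: "{s\<in>S. b \<le> t s} = S" by auto
      have "(\<Sum>s\<in>S. w s * t s) = b * (\<Sum>s\<in>{s\<in>S. b \<le> t s}. w s)"
        unfolding eqS using \<open>\<forall>s\<in>S. t s = b\<close> by (simp add: sum_distrib_left mult.commute)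
      also have "\<dots> \<le> C" by (fact Fb)
      also have "\<dots> \<le> C * (1 + ln (B / a))" using C0 lnB by (simp add: distrib_left)
      finally show ?thesis .
    next
      case False
      define R where "R = t ` S - {b}"
      have Rne: "R \<noteq> {}" unfolding R_def using False bin by auto
      have Rfin: "finite R" unfolding R_def using fin by simp
      define b' where "b' = Max R"
      have b'in: "b' \<in> R" unfolding b'_def using Rne Rfin by simp
      have Rle: "\<forall>x\<in>R. x \<le> b'" unfolding b'_def using Rfin by simp
      have b'lt: "b' < b" using b'in bge unfolding R_def by force
      have ab': "a \<le> b'" using b'in less.prems unfolding R_def by auto
      have b'pos: "b' > 0" using ab' apos by simp
      define t' where "t' = (\<lambda>s. min (t s) b')"
      have img: "t' ` S \<subseteq> R"
      proof
        fix x assume "x \<in> t' ` S"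
        then obtain s where s: "s \<in> S" "x = t' s" by auto
        show "x \<in> R"
        proof (cases "t s = b")
          case True then show ?thesis using s b'lt b'in unfolding t'_def by simp
        next
          case False
          then have "t s \<in> R" using s unfolding R_def by auto
          then show ?thesis using s Rle unfolding t'_def by (simp add: min_def)
        qed
      qed
      have "card (t' ` S) \<le> card R" using img Rfin card_mono by blast
      also have "card R < card (t ` S)" unfolding R_def using bin fin
        by (meson card_Diff1_less finite_imageI)
      finally have cardlt: "card (t' ` S) < card (t ` S)" .
      have IH: "(\<Sum>s\<in>S. w s * t' s) \<le> C * (1 + ln (b' / a))"
      proof (rule less.hyps[OF cardlt])
        show "\<forall>s\<in>S. a \<le> t' s \<and> t' s \<le> b'" using less.prems ab' unfolding t'_def by auto
        show "a \<le> b'" by (fact ab')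
        show "\<forall>q. a \<le> q \<and> q \<le> b' \<longrightarrow> q * (\<Sum>s\<in>{s\<in>S. q \<le> t' s}. w s) \<le> C"
        proof (intro allI impI)
          fix q assume q: "a \<le> q \<and> q \<le> b'"
          have "{s\<in>S. q \<le> t' s} = {s\<in>S. q \<le> t s}" using q unfolding t'_def by auto
          then show "q * (\<Sum>s\<in>{s\<in>S. q \<le> t' s}. w s) \<le> C"
            using less.prems(3) q ab b'lt by auto
        qed
      qed
      have diff: "\<forall>s\<in>S. t s - t' s = (if b \<le> t s then b - b' else 0)"
      proof
        fix s assume s: "s \<in> S"
        show "t s - t' s = (if b \<le> t s then b - b' else 0)"
        proof (cases "t s = b")
          case True then show ?thesis using b'lt unfolding t'_def by simp
        next
          case False
          then have "t s \<in> R" using s unfolding R_def by auto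
          then show ?thesis using s Rle False bge unfolding t'_def by (auto simp: min_def)
        qed
      qed
      have "(\<Sum>s\<in>S. w s * t s) = (\<Sum>s\<in>S. w s * t' s) + (\<Sum>s\<in>S. w s * (t s - t' s))"
        by (simp add: sum.distrib[symmetric] algebra_simps)
      also have "(\<Sum>s\<in>S. w s * (t s - t' s)) = (\<Sum>s\<in>S. if b \<le> t s then (b - b') * w s else 0)"
        using diff by (intro sum.cong) auto
      also have "\<dots> = (b - b') * (\<Sum>s\<in>{s\<in>S. b \<le> t s}. w s)"
        using fin by (simp add: sum.inter_filter sum_distrib_left if_distrib cong: if_cong)
      also have "\<dots> = ((b - b') / b) * (b * (\<Sum>s\<in>{s\<in>S. b \<le> t s}. w s))"
        using bpos by simp
      also have "\<dots> \<le> ((b - b') / b) * C"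
        using Fb b'lt bpos by (intro mult_left_mono) auto
      also have "(b - b') / b \<le> ln (b / b')"
      proof -
        have "ln (b' / b) \<le> b' / b - 1" using b'pos bpos by (intro ln_le_minus_one) simp
        moreover have "ln (b / b') = - ln (b' / b)" using b'pos bpos by (simp add: ln_div)
        moreover have "(b - b') / b = 1 - b' / b" using bpos by (simp add: field_simps)
        ultimately show ?thesis by linarith
      qed
      hence "((b - b') / b) * C \<le> ln (b / b') * C" using C0 by (intro mult_right_mono) auto
      finally have A: "(\<Sum>s\<in>S. w s * t s) \<le> C * (1 + ln (b' / a)) + ln (b / b') * C"
        using IH by linarith
      have "ln (b' / a) + ln (b / b') = ln (b / a)" using apos b'pos bpos by (simp add: ln_div)
      moreover have "ln (b / a) \<le> ln (B / a)" using apos bpos ab by (simp add: divide_right_mono)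
      ultimately have "C * (1 + ln (b' / a)) + ln (b / b') * C \<le> C * (1 + ln (B / a))"
        using C0 by (smt (verit, ccfv_threshold) distrib_left mult.commute mult_left_mono)
      with A show ?thesis by linarith
    qed
  qed
qed
theorem corollary1:
  fixes d :: "'i::finite \<Rightarrow> 'j::finite \<Rightarrow> ('i \<Rightarrow> real) \<Rightarrow> real"
    and \<theta> :: "'j \<Rightarrow> real"
    and f :: "'i \<Rightarrow> real"
    and pbar :: "'j \<Rightarrow> 'i \<Rightarrow> real"
    and qmin qmax k :: real
  assumes d_nonneg: "\<And>i j p. (\<forall>l. p l \<ge> 0) \<Longrightarrow> d i j p \<ge> 0"
    and theta_pos: "\<And>j. \<theta> j > 0"
    and theta_sum: "(\<Sum>j\<in>UNIV. \<theta> j) = 1"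
    and f_pos: "\<And>i. f i > 0"
    and qmin_pos: "qmin > 0"
    and k_pos: "k > 0"
    and qmax_def: "qmax = exp k * qmin"
    and A0_in: "\<And>j. pbar j \<in> price_box qmin qmax f"
    and A0_pos: "\<And>j i. pbar j i > 0"
    and A0_max: "\<And>j p. p \<in> price_box qmin qmax f \<Longrightarrow> type_profit d j p \<le> type_profit d j (pbar j)"
    and A1: "\<And>q. q \<ge> 0 \<Longrightarrow> G_fun \<theta> d pbar f q \<le> H_fun \<theta> d f q"
  shows "personalized_opt \<theta> d qmin qmax f \<le> (1 + k) * uniform_opt \<theta> d qmin qmax f"
  proof -
  have qmax_ge: "qmin \<le> qmax" using qmax_def qmin_pos k_pos by simp
  have box: "(\<lambda>i. q * f i) \<in> price_box qmin qmax f" if "qmin \<le> q" "q \<le> qmax" for q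
    using that f_pos unfolding price_box_def by (auto intro: mult_right_mono)
  have TO: "type_opt d qmin qmax f j = type_profit d j (pbar j)" for j
    unfolding type_opt_def using A0_in A0_max by (intro cSup_eq_maximum) auto
  have TPq: "total_profit \<theta> d (\<lambda>i. q * f i) = q * H_fun \<theta> d f q" for q
    unfolding total_profit_def type_profit_def H_fun_def
    by (simp add: sum_distrib_left algebra_simps)
  have bdd: "bdd_above ((\<lambda>q. total_profit \<theta> d (\<lambda>i. q * f i)) ` {qmin..qmax})"
  proof (rule bdd_aboveI2)
    fix q assume "q \<in> {qmin..qmax}"
    then show "total_profit \<theta> d (\<lambda>i. q * f i) \<le> (\<Sum>j\<in>UNIV. \<theta> j * type_profit d j (pbar j))"
      unfolding total_profit_def using box A0_max theta_pos
      by (intro sum_mono mult_left_mono) (auto intro: less_imp_le)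
  qed
  have Uq: "total_profit \<theta> d (\<lambda>i. q * f i) \<le> uniform_opt \<theta> d qmin qmax f"
    if "qmin \<le> q" "q \<le> qmax" for q
    unfolding uniform_opt_def using that bdd by (intro cSup_upper) auto
  have Hnn: "H_fun \<theta> d f q \<ge> 0" if "q \<ge> 0" for q
    unfolding H_fun_def using theta_pos f_pos that
    by (intro sum_nonneg mult_nonneg_nonneg d_nonneg allI) (auto intro: less_imp_le)
  have C0: "uniform_opt \<theta> d qmin qmax f \<ge> 0"
    using Uq[OF order_refl qmax_ge] TPq[of qmin] Hnn[of qmin] qmin_pos
    by (smt (verit) mult_nonneg_nonneg)
  define w where "w = (\<lambda>(i,j). \<theta> j * (f i * d i j (pbar j)))"
  define t where "t = (\<lambda>(i::'i,j::'j). pbar j i / f i)"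
  have wn: "\<forall>s\<in>UNIV. 0 \<le> w s"
  proof
    fix s :: "'i \<times> 'j" obtain i j where s: "s = (i,j)" by (cases s)
    have "\<forall>l. pbar j l \<ge> 0" using A0_pos less_imp_le by blast
    then show "0 \<le> w s" unfolding w_def s using theta_pos[of j] f_pos[of i] d_nonneg
      by (simp add: mult_nonneg_nonneg)
  qed
  have tb: "\<forall>s\<in>UNIV. qmin \<le> t s \<and> t s \<le> qmax"
  proof
    fix s :: "'i \<times> 'j" obtain i j where s: "s = (i,j)" by (cases s)
    have "qmin * f i \<le> pbar j i" "pbar j i \<le> qmax * f i" using A0_in[of j] unfolding price_box_def by auto
    then show "qmin \<le> t s \<and> t s \<le> qmax" unfolding t_def s using f_pos[of i]
      by (simp add: field_simps)
  qed
  have G_eq: "G_fun \<theta> d pbar f q = (\<Sum>s\<in>{s\<in>UNIV. q \<le> t s}. w s)" for q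
  proof -
    have "(\<Sum>s\<in>{s\<in>UNIV. q \<le> t s}. w s) = (\<Sum>s\<in>UNIV. if q \<le> t s then w s else 0)"
      using sum.inter_filter[of UNIV w "\<lambda>s. q \<le> t s"] by simp
    also have "\<dots> = (\<Sum>j\<in>UNIV. \<Sum>i\<in>UNIV. if q \<le> t (i,j) then w (i,j) else 0)"
      by (subst sum.swap) (simp add: sum.cartesian_product UNIV_Times_UNIV[symmetric] del: UNIV_Times_UNIV)
    also have "\<dots> = G_fun \<theta> d pbar f q"
      unfolding G_fun_def delta_ind_def w_def t_def by (simp add: sum_distrib_left if_distrib cong: if_cong)
    finally show ?thesis by simp
  qed
  have P_eq: "personalized_opt \<theta> d qmin qmax f = (\<Sum>s\<in>UNIV. w s * t s)"
  proof -
    have "(\<Sum>s\<in>UNIV. w s * t s) = (\<Sum>j\<in>UNIV. \<Sum>i\<in>UNIV. w (i,j) * t (i,j))"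
      by (subst sum.swap) (simp add: sum.cartesian_product UNIV_Times_UNIV[symmetric] del: UNIV_Times_UNIV)
    also have "\<dots> = (\<Sum>j\<in>UNIV. \<theta> j * type_profit d j (pbar j))"
      unfolding type_profit_def w_def t_def using f_pos
      by (simp add: sum_distrib_left field_simps less_imp_neq[symmetric])
    finally show ?thesis unfolding personalized_opt_def TO by simp
  qed
  have hyp: "\<forall>q. qmin \<le> q \<and> q \<le> qmax \<longrightarrow> q * (\<Sum>s\<in>{s\<in>UNIV. q \<le> t s}. w s) \<le> uniform_opt \<theta> d qmin qmax f"
  proof (intro allI impI)
    fix q assume q: "qmin \<le> q \<and> q \<le> qmax"
    have "q * G_fun \<theta> d pbar f q \<le> q * H_fun \<theta> d f q"
      using A1[of q] q qmin_pos by (intro mult_left_mono) auto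
    also have "\<dots> \<le> uniform_opt \<theta> d qmin qmax f" using Uq[of q] q TPq[of q] by simp
    finally show "q * (\<Sum>s\<in>{s\<in>UNIV. q \<le> t s}. w s) \<le> uniform_opt \<theta> d qmin qmax f"
      using G_eq by simp
  qed
  have "(\<Sum>s\<in>UNIV. w s * t s) \<le> uniform_opt \<theta> d qmin qmax f * (1 + ln (qmax / qmin))"
    by (rule key[OF finite qmin_pos wn tb qmax_ge C0 hyp])
  moreover have "ln (qmax / qmin) = k" using qmax_def qmin_pos by simp
  ultimately show ?thesis using P_eq by (simp add: mult.commute)
qed

end
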